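(* Let $k\geq2$ and for $\lambda>0$ consider the uniform mixture of $\mathcal D_1,\dots,\mathcal D_k$ where $\mathcal D_i=\mathcal N(\lambda e_i, I_k)$ on $\mathbb R^k$ ($e_i$ the $i$-th standard basis vector). Let $Z$ be a sample from the mixture and $J$ the index of the component it was drawn from. Then one can choose $\lambda=\Theta(\sqrt{\log k})$ such that every estimator $\Psi$ (not necessarily efficiently computable) satisfies $\mathbb P(\Psi(Z)\neq J)\geq c$ for some absolute constant $c>0$. *)

theory Defs
  imports "HOL-Probability.Probability"
begin

text \<open>Mixture component i (indices 0..k-1): the Gaussian N(lam e_i, I_k) on R^k,
  realised as the product of k independent one-dimensional normal laws
  with mean lam for coordinate i and 0 otherwise, variance 1.\<close>
definition gauss_comp :: "nat \<Rightarrow> real \<Rightarrow> nat \<Rightarrow> (nat \<Rightarrow> real) measure" where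
  "gauss_comp k lam i =
     PiM {..<k} (\<lambda>j. density lborel (normal_density (if j = i then lam else 0) 1))"

text \<open>P(Psi(Z) \<noteq> J) for (J, Z) with J uniform on {0..k-1} and Z ~ D_J.\<close>
definition mixture_error :: "nat \<Rightarrow> real \<Rightarrow> ((nat \<Rightarrow> real) \<Rightarrow> nat) \<Rightarrow> real" where
  "mixture_error k lam Psi =
     (\<Sum>i<k. (1 / real k) * measure (gauss_comp k lam i)
                              {z \<in> space (gauss_comp k lam i). Psi z \<noteq> i})"

end

theory Submission
  imports Defs
begin

definition nd :: "real \<Rightarrow> real measure" where
  "nd mu = density lborel (normal_density mu 1)"

definition LR :: "real \<Rightarrow> real \<Rightarrow> real" where
  "LR lam x = exp (lam * x - lam\<^sup>2 / 2)"

lemma prob_nd: "prob_space (nd mu)"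
  unfolding nd_def by (rule prob_space_normal_density) simp

lemma sets_nd[simp, measurable_cong]: "sets (nd mu) = sets borel"
  unfolding nd_def by simp

lemma space_nd[simp]: "space (nd mu) = UNIV"
  unfolding nd_def by simp

lemma nd_shift: "normal_density 0 1 x * LR lam x = normal_density lam 1 x"
  unfolding normal_density_def LR_def
  by (simp add: exp_add[symmetric] mult.assoc power2_eq_square algebra_simps)

lemma nd_shift2: "normal_density 0 1 x * (LR lam x)\<^sup>2 = exp (lam\<^sup>2) * normal_density (2*lam) 1 x"
  unfolding normal_density_def LR_def
  apply (simp add: exp_add[symmetric] power2_eq_square algebra_simps flip: exp_of_nat_mult)
  apply (simp add: field_simps)
  done

lemma LR_meas[measurable]: "LR lam \<in> borel_measurable borel"
  unfolding LR_def by measurable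

lemma prodQ: "product_prob_space (\<lambda>_::nat. nd 0)"
  by (intro product_prob_spaceI prob_nd)

lemma prodM: "product_prob_space (\<lambda>j::nat. nd (if j = i then lam else 0))"
  by (intro product_prob_spaceI prob_nd)


lemma ind_PiE:
  assumes "finite I" "z \<in> extensional I"
  shows "indicator (PiE I A) z = (\<Prod>j\<in>I. indicator (A j) (z j) :: ennreal)"
proof (cases "z \<in> PiE I A")
  case True then show ?thesis by (auto simp: PiE_def Pi_def indicator_def)
next
  case False
  then obtain j where "j \<in> I" "z j \<notin> A j" using assms(2) by (auto simp: PiE_def Pi_def)
  then show ?thesis using False assms(1) by (auto simp: indicator_def intro!: prod_zero)
qed

lemma gauss_dens:
  assumes "i < k"
  shows "gauss_comp k lam i = density (PiM {..<k} (\<lambda>_. nd 0)) (\<lambda>z. ennreal (LR lam (z i)))"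
proof -
  have ik[measurable]: "i \<in> {..<k}" using assms by simp
  have Lm[measurable]: "(\<lambda>z. LR lam (z i)) \<in> borel_measurable (PiM {..<k} (\<lambda>_. nd 0))"
    unfolding LR_def by measurable
  interpret M: product_prob_space "\<lambda>j. nd (if j = i then lam else 0)" by (rule prodM)
  interpret Q: product_prob_space "\<lambda>_::nat. nd 0" by (rule prodQ)
  have "density (PiM {..<k} (\<lambda>_. nd 0)) (\<lambda>z. ennreal (LR lam (z i)))
        = PiM {..<k} (\<lambda>j. nd (if j = i then lam else 0))"
  proof (rule M.PiM_eqI)
    show "finite {..<k}" by simp
    show "sets (density (PiM {..<k} (\<lambda>_. nd 0)) (\<lambda>z. ennreal (LR lam (z i))))
          = sets (PiM {..<k} (\<lambda>j. nd (if j = i then lam else 0)))"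
      unfolding sets_density by (rule sets_PiM_cong) simp_all
    fix A assume A: "\<And>j. j \<in> {..<k} \<Longrightarrow> A j \<in> sets (nd (if j = i then lam else 0))"
    define g where "g j x = (if j = i then ennreal (LR lam x) else 1) * indicator (A j) x" for j x
    have Am: "A j \<in> sets borel" if "j < k" for j using A[of j] that by simp
    have PA: "PiE {..<k} A \<in> sets (PiM {..<k} (\<lambda>_. nd 0))"
      using Am by (auto intro!: sets_PiM_I_finite)
    have "emeasure (density (PiM {..<k} (\<lambda>_. nd 0)) (\<lambda>z. ennreal (LR lam (z i)))) (PiE {..<k} A)
        = (\<integral>\<^sup>+z. ennreal (LR lam (z i)) * indicator (PiE {..<k} A) z \<partial>PiM {..<k} (\<lambda>_. nd 0))"
      using PA by (intro emeasure_density) auto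
    also have "\<dots> = (\<integral>\<^sup>+z. (\<Prod>j\<in>{..<k}. g j (z j)) \<partial>PiM {..<k} (\<lambda>_. nd 0))"
    proof (rule nn_integral_cong)
      fix z assume z: "z \<in> space (PiM {..<k} (\<lambda>_. nd 0))"
      then have ze: "z \<in> extensional {..<k}" by (simp add: space_PiM PiE_def)
      have "(\<Prod>j\<in>{..<k}. g j (z j)) = (\<Prod>j\<in>{..<k}. (if j = i then ennreal (LR lam (z j)) else 1)) * (\<Prod>j\<in>{..<k}. indicator (A j) (z j))"
        unfolding g_def by (rule prod.distrib)
      also have "(\<Prod>j\<in>{..<k}. (if j = i then ennreal (LR lam (z j)) else 1)) = ennreal (LR lam (z i))"
        using assms by (simp add: prod.delta)
      finally show "ennreal (LR lam (z i)) * indicator (PiE {..<k} A) z = (\<Prod>j\<in>{..<k}. g j (z j))"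
        using ind_PiE[OF _ ze, of A] by simp
    qed
    also have "\<dots> = (\<Prod>j\<in>{..<k}. integral\<^sup>N (nd 0) (g j))"
    proof (rule Q.product_nn_integral_prod)
      fix j assume "j \<in> {..<k}"
      then have [measurable]: "A j \<in> sets borel" using Am by simp
      show "g j \<in> borel_measurable (nd 0)" unfolding g_def by measurable
    qed simp
    also have "\<dots> = (\<Prod>j\<in>{..<k}. emeasure (nd (if j = i then lam else 0)) (A j))"
    proof (rule prod.cong[OF refl])
      fix j assume j: "j \<in> {..<k}"
      show "integral\<^sup>N (nd 0) (g j) = emeasure (nd (if j = i then lam else 0)) (A j)"
      proof (cases "j = i")
        case True
        have "integral\<^sup>N (nd 0) (g j) = (\<integral>\<^sup>+x. ennreal (normal_density 0 1 x) * (ennreal (LR lam x) * indicator (A j) x) \<partial>lborel)"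
          unfolding nd_def g_def using True j Am by (subst nn_integral_density) (auto simp: LR_def)
        also have "\<dots> = (\<integral>\<^sup>+x. ennreal (normal_density lam 1 x) * indicator (A j) x \<partial>lborel)"
          by (intro nn_integral_cong) (simp add: mult.assoc[symmetric] ennreal_mult'[symmetric] nd_shift)
        also have "\<dots> = emeasure (nd lam) (A j)"
          unfolding nd_def using j Am by (subst emeasure_density) auto
        finally show ?thesis using True by simp
      next
        case False
        then have "g j = indicator (A j)" by (auto simp: g_def fun_eq_iff)
        then show ?thesis using j Am False by simp
      qed
    qed
    finally show "emeasure (density (PiM {..<k} (\<lambda>_. nd 0)) (\<lambda>z. ennreal (LR lam (z i)))) (PiE {..<k} A)
       = (\<Prod>j\<in>{..<k}. emeasure (nd (if j = i then lam else 0)) (A j))" .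
  qed
  then show ?thesis unfolding gauss_comp_def nd_def by simp
qed


lemma int_nd: "(\<integral>\<^sup>+x. ennreal (normal_density mu 1 x) \<partial>lborel) = 1"
proof -
  have "emeasure (nd mu) (space (nd mu)) = 1" by (rule prob_space.emeasure_space_1[OF prob_nd])
  then show ?thesis unfolding nd_def by (simp add: emeasure_density)
qed

lemma coord_int:
  fixes i k :: nat
  assumes "i < k" and h[measurable]: "h \<in> borel_measurable borel"
  shows "(\<integral>\<^sup>+z. h (z i) \<partial>PiM {..<k} (\<lambda>_. nd 0)) = (\<integral>\<^sup>+x. h x \<partial>nd 0)"
proof -
  interpret Q: product_prob_space "\<lambda>_::nat. nd 0" by (rule prodQ)
  define f where "f = (\<lambda>j x. if j = i then h x else 1)"
  have "(\<integral>\<^sup>+z. h (z i) \<partial>PiM {..<k} (\<lambda>_. nd 0)) = (\<integral>\<^sup>+z. (\<Prod>j\<in>{..<k}. f j (z j)) \<partial>PiM {..<k} (\<lambda>_. nd 0))"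
    using assms(1) by (intro nn_integral_cong) (simp add: f_def prod.delta)
  also have "\<dots> = (\<Prod>j\<in>{..<k}. integral\<^sup>N (nd 0) (f j))"
    by (rule Q.product_nn_integral_prod) (auto simp: f_def)
  also have "\<dots> = (\<Prod>j\<in>{..<k}. if j = i then (\<integral>\<^sup>+x. h x \<partial>nd 0) else 1)"
  proof (rule prod.cong[OF refl])
    fix j show "integral\<^sup>N (nd 0) (f j) = (if j = i then (\<integral>\<^sup>+x. h x \<partial>nd 0) else 1)"
      using prob_space.emeasure_space_1[OF prob_nd, of 0] by (simp add: f_def)
  qed
  also have "\<dots> = (\<integral>\<^sup>+x. h x \<partial>nd 0)"
    using assms(1) by (simp add: prod.delta)
  finally show ?thesis .
qed

lemma LR_sq_int:
  assumes "T > 0" shows "(\<integral>\<^sup>+x. ennreal ((LR lam x)\<^sup>2 / (4*T)) \<partial>nd 0) = ennreal (exp (lam\<^sup>2) / (4*T))"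
proof -
  have "(\<integral>\<^sup>+x. ennreal ((LR lam x)\<^sup>2 / (4*T)) \<partial>nd 0)
      = (\<integral>\<^sup>+x. ennreal (normal_density 0 1 x) * ennreal ((LR lam x)\<^sup>2 / (4*T)) \<partial>lborel)"
    unfolding nd_def by (subst nn_integral_density) auto
  also have "\<dots> = (\<integral>\<^sup>+x. ennreal (exp (lam\<^sup>2) / (4*T)) * ennreal (normal_density (2*lam) 1 x) \<partial>lborel)"
  proof (rule nn_integral_cong)
    fix x
    have "normal_density 0 1 x * ((LR lam x)\<^sup>2 / (4*T)) = exp (lam\<^sup>2) / (4*T) * normal_density (2*lam) 1 x"
      using nd_shift2[of x lam] by (simp add: field_simps)
    then show "ennreal (normal_density 0 1 x) * ennreal ((LR lam x)\<^sup>2 / (4*T)) = ennreal (exp (lam\<^sup>2) / (4*T)) * ennreal (normal_density (2*lam) 1 x)"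
      using assms by (simp add: ennreal_mult[symmetric])
  qed
  also have "\<dots> = ennreal (exp (lam\<^sup>2) / (4*T))"
    by (subst nn_integral_cmult) (auto simp: int_nd)
  finally show ?thesis .
qed

lemma key_bound:
  assumes "i < k" "T > 0" and A: "A \<in> sets (PiM {..<k} (\<lambda>_. nd 0))"
  shows "emeasure (gauss_comp k lam i) A \<le> ennreal T * emeasure (PiM {..<k} (\<lambda>_. nd 0)) A + ennreal (exp (lam\<^sup>2) / (4*T))"
proof -
  have ik[measurable]: "i \<in> {..<k}" using assms by simp
  have Lm[measurable]: "(\<lambda>z. LR lam (z i)) \<in> borel_measurable (PiM {..<k} (\<lambda>_. nd 0))"
    unfolding LR_def by measurable
  have "emeasure (gauss_comp k lam i) A = (\<integral>\<^sup>+z. ennreal (LR lam (z i)) * indicator A z \<partial>PiM {..<k} (\<lambda>_. nd 0))"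
    unfolding gauss_dens[OF assms(1)] using A by (intro emeasure_density) auto
  also have "\<dots> \<le> (\<integral>\<^sup>+z. ennreal T * indicator A z + ennreal ((LR lam (z i))\<^sup>2 / (4*T)) \<partial>PiM {..<k} (\<lambda>_. nd 0))"
  proof (rule nn_integral_mono)
    fix z
    have "LR lam (z i) \<le> T + (LR lam (z i))\<^sup>2 / (4*T)"
    proof -
      have "0 \<le> (LR lam (z i) - 2*T)\<^sup>2" by simp
      then have "4*T*LR lam (z i) \<le> 4*T*T + (LR lam (z i))\<^sup>2" by (simp add: power2_eq_square algebra_simps)
      then show ?thesis using assms(2) by (simp add: field_simps)
    qed
    then show "ennreal (LR lam (z i)) * indicator A z \<le> ennreal T * indicator A z + ennreal ((LR lam (z i))\<^sup>2 / (4*T))"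
      using assms(2) by (auto simp: indicator_def ennreal_plus[symmetric] simp del: ennreal_plus intro!: ennreal_leI)
  qed
  also have "\<dots> = ennreal T * emeasure (PiM {..<k} (\<lambda>_. nd 0)) A + (\<integral>\<^sup>+z. ennreal ((LR lam (z i))\<^sup>2 / (4*T)) \<partial>PiM {..<k} (\<lambda>_. nd 0))"
    using A by (subst nn_integral_add) (auto simp: nn_integral_cmult_indicator)
  also have "(\<integral>\<^sup>+z. ennreal ((LR lam (z i))\<^sup>2 / (4*T)) \<partial>PiM {..<k} (\<lambda>_. nd 0)) = ennreal (exp (lam\<^sup>2) / (4*T))"
    using coord_int[OF assms(1), of "\<lambda>x. ennreal ((LR lam x)\<^sup>2 / (4*T))"] LR_sq_int[OF assms(2)] by simp
  finally show ?thesis .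
qed


lemma main_k:
  fixes k :: nat
  assumes k2: "k \<ge> 2"
    and Psi: "Psi \<in> measurable (PiM {..<k} (\<lambda>_. (borel :: real measure))) (count_space UNIV)"
  shows "mixture_error k (sqrt (1/2) * sqrt (ln (real k))) Psi \<ge> 1 - exp (- ln 2 / 4)"
proof -
  define l where "l = ln (real k)"
  define lam where "lam = sqrt (1/2) * sqrt (ln (real k))"
  define Q where "Q = PiM {..<k} (\<lambda>_. nd 0)"
  define T where "T = exp (3 * l / 4) / 2"
  define E where "E = exp (lam\<^sup>2) / (4*T)"
  have kpos: "real k > 0" using k2 by simp
  have l2: "l \<ge> ln 2" unfolding l_def using k2 by simp
  have lpos: "l > 0" using l2 ln_gt_zero[of 2] by linarith
  have lam2: "lam\<^sup>2 = l / 2" unfolding lam_def l_def using lpos[unfolded l_def]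
    by (simp add: power_mult_distrib)
  have Tpos: "T > 0" unfolding T_def by simp
  have kexp: "real k = exp l" unfolding l_def using kpos by simp
  have probQ: "prob_space Q" unfolding Q_def by (intro prob_space_PiM prob_nd)
  interpret Q: prob_space Q by (rule probQ)
  have setsQ: "sets (PiM {..<k} (\<lambda>_. (borel :: real measure))) = sets Q"
    unfolding Q_def by (rule sets_PiM_cong) simp_all
  have PsiQ: "Psi \<in> measurable Q (count_space UNIV)"
    using Psi unfolding measurable_cong_sets[OF setsQ refl] .
  define B where "B i = {z \<in> space Q. Psi z = i}" for i
  have B: "B i \<in> sets Q" for i
  proof -
    have "Psi -` {i} \<inter> space Q \<in> sets Q" by (rule measurable_sets[OF PsiQ]) simp
    moreover have "Psi -` {i} \<inter> space Q = B i" unfolding B_def by auto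
    ultimately show ?thesis by simp
  qed
  have setsP: "sets (gauss_comp k lam i) = sets Q" for i
    unfolding gauss_comp_def Q_def nd_def by (rule sets_PiM_cong) simp_all
  have spP: "space (gauss_comp k lam i) = space Q" for i
    using sets_eq_imp_space_eq[OF setsP] .
  have probP: "prob_space (gauss_comp k lam i)" for i
    unfolding gauss_comp_def by (intro prob_space_PiM prob_space_normal_density) simp
  have err_i: "measure (gauss_comp k lam i) {z \<in> space (gauss_comp k lam i). Psi z \<noteq> i}
       \<ge> 1 - (T * measure Q (B i) + E)" if i: "i < k" for i
  proof -
    interpret P: prob_space "gauss_comp k lam i" by (rule probP)
    have BP: "B i \<in> sets (gauss_comp k lam i)" using B setsP by simp
    have eq: "{z \<in> space (gauss_comp k lam i). Psi z \<noteq> i} = space (gauss_comp k lam i) - B i"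
      unfolding B_def spP by auto
    have "emeasure (gauss_comp k lam i) (B i) \<le> ennreal T * emeasure Q (B i) + ennreal E"
      unfolding E_def Q_def using key_bound[OF i Tpos, of "B i" lam] B unfolding Q_def by simp
    also have "\<dots> = ennreal (T * measure Q (B i) + E)"
      using Tpos unfolding E_def by (simp add: Q.emeasure_eq_measure ennreal_mult[symmetric] ennreal_plus[symmetric] del: ennreal_plus)
    finally have h: "ennreal (measure (gauss_comp k lam i) (B i)) \<le> ennreal (T * measure Q (B i) + E)"
      by (simp only: P.emeasure_eq_measure)
    have "0 \<le> T * measure Q (B i) + E" using Tpos unfolding E_def by simp
    then have "measure (gauss_comp k lam i) (B i) \<le> T * measure Q (B i) + E"
      using h ennreal_le_iff by blast
    then show ?thesis unfolding eq using P.prob_compl[OF BP] by simp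
  qed
  have sumB: "(\<Sum>i<k. measure Q (B i)) \<le> 1"
  proof -
    have "(\<Sum>i<k. measure Q (B i)) = measure Q (\<Union>i\<in>{..<k}. B i)"
      by (rule Q.finite_measure_finite_Union[symmetric]) (use B in \<open>auto simp: disjoint_family_on_def B_def\<close>)
    also have "\<dots> \<le> 1" by (rule Q.prob_le_1)
    finally show ?thesis .
  qed
  have "mixture_error k lam Psi \<ge> (\<Sum>i<k. (1 / real k) * (1 - (T * measure Q (B i) + E)))"
    unfolding mixture_error_def using kpos
    by (intro sum_mono mult_left_mono err_i) auto
  also have "(\<Sum>i<k. (1 / real k) * (1 - (T * measure Q (B i) + E)))
      = 1 - E - (T / real k) * (\<Sum>i<k. measure Q (B i))"
  proof -
    have "(\<Sum>i<k. (1 / real k) * (1 - (T * measure Q (B i) + E)))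
        = (\<Sum>i<k. (1 - E) / real k - (T / real k) * measure Q (B i))"
      by (rule sum.cong) (auto simp: field_simps)
    also have "\<dots> = (\<Sum>i<k. (1 - E) / real k) - (\<Sum>i<k. (T / real k) * measure Q (B i))"
      by (rule sum_subtractf)
    also have "\<dots> = 1 - E - (T / real k) * (\<Sum>i<k. measure Q (B i))"
      using kpos by (simp add: sum_distrib_left)
    finally show ?thesis .
  qed
  finally have "mixture_error k lam Psi \<ge> 1 - E - T / real k"
    using sumB Tpos kpos
    by (smt (verit, ccfv_SIG) divide_pos_pos mult_left_le)
  moreover have "E + T / real k = exp (- l / 4)"
  proof -
    have e1: "exp (l/2) = exp (- l / 4) * exp (3*l/4)" by (simp add: exp_add[symmetric])
    have e2: "exp (3*l/4) = exp (- l / 4) * exp l" by (simp add: exp_add[symmetric])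
    have "E = exp (- l / 4) / 2" unfolding E_def T_def lam2 e1 by simp
    moreover have "T / real k = exp (- l / 4) / 2" unfolding T_def kexp e2 by simp
    ultimately show ?thesis by linarith
  qed
  moreover have "exp (- l / 4) \<le> exp (- ln 2 / 4)" using l2 by simp
  ultimately show ?thesis unfolding lam_def by linarith
qed

theorem lemma7p3:
  shows "\<exists>c>0. \<exists>a>0. \<exists>b>0. \<forall>k::nat. k \<ge> 2 \<longrightarrow>
           (\<exists>lam>0. a * sqrt (ln (real k)) \<le> lam \<and> lam \<le> b * sqrt (ln (real k)) \<and>
              (\<forall>Psi \<in> measurable (PiM {..<k} (\<lambda>_. (borel :: real measure))) (count_space UNIV).
                  mixture_error k lam Psi \<ge> c))"
proof -
  have cpos: "1 - exp (- ln 2 / 4) > (0::real)" by simp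
  have main: "\<forall>k::nat. k \<ge> 2 \<longrightarrow>
           (\<exists>lam>0. sqrt (1/2) * sqrt (ln (real k)) \<le> lam \<and> lam \<le> sqrt (1/2) * sqrt (ln (real k)) \<and>
              (\<forall>Psi \<in> measurable (PiM {..<k} (\<lambda>_. (borel :: real measure))) (count_space UNIV).
                  mixture_error k lam Psi \<ge> 1 - exp (- ln 2 / 4)))"
  proof (intro allI impI)
    fix k :: nat assume k2: "k \<ge> 2"
    have "ln (real k) > 0" using k2 by simp
    then have "sqrt (1/2) * sqrt (ln (real k)) > 0" by simp
    then show "\<exists>lam>0. sqrt (1/2) * sqrt (ln (real k)) \<le> lam \<and> lam \<le> sqrt (1/2) * sqrt (ln (real k)) \<and>
              (\<forall>Psi \<in> measurable (PiM {..<k} (\<lambda>_. (borel :: real measure))) (count_space UNIV).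
                  mixture_error k lam Psi \<ge> 1 - exp (- ln 2 / 4))"
      using main_k[OF k2] by blast
  qed
  have s: "sqrt (1/2::real) > 0" by simp
  show ?thesis
    using cpos s main by blast
qed

end
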